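(* Let $\Gamma$ be a positive recursive absorbing game with payoffs in $(0,1]$, let $x\in X$ be a nonabsorbing mixed action profile and $i\in I$. Then $v_i\le\max\{0,\rho_i(x)\}$. In particular, if $\rho_i(x)=-\infty$ then $v_i=0$, and if $\rho_i(x)>-\infty$ then $\rho_i(x)\ge v_i$.
   Context: A positive recursive absorbing game is $\Gamma=(I,(A_i)_{i\in I},(r_i)_{i\in I},p)$ with $I$ finite, $A_i$ finite nonempty, $A=\prod_iA_i$, $r_i:A\to(0,1]$, $p:A\to[0,1]$; at each stage, if not yet absorbed, players choose $a^n\in A$, the game absorbs with probability $p(a^n)$ with terminal payoff $r(a^n)$, and otherwise continues with payoff $0$. Undiscounted payoff: $\gamma(\sigma)=\mathbf E_\sigma[r(a^\theta)\mathbf 1_{\theta<\infty}]$ for behavior strategy profiles $\sigma$, with $\theta$ the absorption stage. Minmax value: $v_i:=\inf_{\sigma_{-i}}\sup_{\sigma_i}\gamma_i(\sigma)$. Let $\Xi_i=\Delta(A_i)$, $\Xi=\prod_i\Xi_i$; for $x\in\Xi$, ${\rm supp}(x)=\prod_i{\rm supp}(x_i)$, $p(x)=\sum_{a\in A}p(a)\prod_jx_j(a_j)$, and when $p(x)>0$, $r_i(x)=\sum_a r_i(a)p(a)\prod_jx_j(a_j)/p(x)$. Let $B=\{a\in A:p(a)=0\}$, and let $X$ be the set of $x\in\Xi$ whose support is contained in a single connected component of the graph on $B$ where two profiles are adjacent iff they differ in exactly one player's action (equivalently, $X=\{x\in\Xi:p(x)=0\}$). Define $\rho_i(x):=\max\{r_i(a_i,x_{-i}):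 a_i\in A_i,\ p(a_i,x_{-i})>0\}$, with the convention $\max\emptyset=-\infty$. *)

theory Defs
  imports "HOL-Analysis.Analysis" "HOL-Library.Extended_Real"
begin

definition profiles :: "('i \<Rightarrow> 'a set) \<Rightarrow> ('i \<Rightarrow> 'a) set" where
  "profiles A = Pi\<^sub>E UNIV A"

definition mixed :: "'a set \<Rightarrow> ('a \<Rightarrow> real) \<Rightarrow> bool" where
  "mixed S y \<longleftrightarrow> (\<forall>b. 0 \<le> y b) \<and> (\<forall>b. b \<notin> S \<longrightarrow> y b = 0) \<and> sum y S = 1"

definition mixed_profile :: "('i \<Rightarrow> 'a set) \<Rightarrow> ('i \<Rightarrow> 'a \<Rightarrow> real) \<Rightarrow> bool" where
  "mixed_profile A x \<longleftrightarrow> (\<forall>j. mixed (A j) (x j))"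

definition prob_prof :: "('i::finite \<Rightarrow> 'a \<Rightarrow> real) \<Rightarrow> ('i \<Rightarrow> 'a) \<Rightarrow> real" where
  "prob_prof x a = (\<Prod>j\<in>UNIV. x j (a j))"

definition pmix :: "('i::finite \<Rightarrow> 'a set) \<Rightarrow> (('i \<Rightarrow> 'a) \<Rightarrow> real) \<Rightarrow> ('i \<Rightarrow> 'a \<Rightarrow> real) \<Rightarrow> real" where
  "pmix A p x = (\<Sum>a\<in>profiles A. p a * prob_prof x a)"

definition rmix :: "('i::finite \<Rightarrow> 'a set) \<Rightarrow> ('i \<Rightarrow> ('i \<Rightarrow> 'a) \<Rightarrow> real) \<Rightarrow> (('i \<Rightarrow> 'a) \<Rightarrow> real)
     \<Rightarrow> 'i \<Rightarrow> ('i \<Rightarrow> 'a \<Rightarrow> real) \<Rightarrow> real" where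
  "rmix A r p i x = (\<Sum>a\<in>profiles A. r i a * p a * prob_prof x a) / pmix A p x"

definition dirac :: "'a \<Rightarrow> 'a \<Rightarrow> real" where
  "dirac b = (\<lambda>c. if c = b then 1 else 0)"

definition nonabs :: "('i::finite \<Rightarrow> 'a set) \<Rightarrow> (('i \<Rightarrow> 'a) \<Rightarrow> real) \<Rightarrow> ('i \<Rightarrow> 'a \<Rightarrow> real) set" where
  "nonabs A p = {x. mixed_profile A x \<and> pmix A p x = 0}"

definition rho :: "('i::finite \<Rightarrow> 'a set) \<Rightarrow> ('i \<Rightarrow> ('i \<Rightarrow> 'a) \<Rightarrow> real) \<Rightarrow> (('i \<Rightarrow> 'a) \<Rightarrow> real)
     \<Rightarrow> 'i \<Rightarrow> ('i \<Rightarrow> 'a \<Rightarrow> real) \<Rightarrow> ereal" where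
  "rho A r p i x =
     (let S = {b \<in> A i. pmix A p (x(i := dirac b)) > 0}
      in if S = {} then -\<infinity> else ereal (Max ((\<lambda>b. rmix A r p i (x(i := dirac b))) ` S)))"

text \<open>Behavior strategies: a history is the list of (nonabsorbing) action profiles played so far;
  a strategy of player j maps each history to a mixed action in A j.\<close>
definition strat :: "('i \<Rightarrow> 'a set) \<Rightarrow> 'i \<Rightarrow> (('i \<Rightarrow> 'a) list \<Rightarrow> 'a \<Rightarrow> real) \<Rightarrow> bool" where
  "strat A j s \<longleftrightarrow> (\<forall>h. mixed (A j) (s h))"

definition strat_profile :: "('i \<Rightarrow> 'a set) \<Rightarrow> ('i \<Rightarrow> ('i \<Rightarrow> 'a) list \<Rightarrow> 'a \<Rightarrow> real) \<Rightarrow> bool" where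
  "strat_profile A \<sigma> \<longleftrightarrow> (\<forall>j. strat A j (\<sigma> j))"

definition reach :: "(('i::finite \<Rightarrow> 'a) \<Rightarrow> real) \<Rightarrow> ('i \<Rightarrow> ('i \<Rightarrow> 'a) list \<Rightarrow> 'a \<Rightarrow> real)
     \<Rightarrow> ('i \<Rightarrow> 'a) list \<Rightarrow> real" where
  "reach p \<sigma> h = (\<Prod>k<length h. prob_prof (\<lambda>j. \<sigma> j (take k h)) (h ! k) * (1 - p (h ! k)))"

definition absorb_pay :: "('i::finite \<Rightarrow> 'a set) \<Rightarrow> ('i \<Rightarrow> ('i \<Rightarrow> 'a) \<Rightarrow> real) \<Rightarrow> (('i \<Rightarrow> 'a) \<Rightarrow> real)
     \<Rightarrow> ('i \<Rightarrow> ('i \<Rightarrow> 'a) list \<Rightarrow> 'a \<Rightarrow> real) \<Rightarrow> 'i \<Rightarrow> ('i \<Rightarrow> 'a) list \<Rightarrow> real" where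
  "absorb_pay A r p \<sigma> i h = (\<Sum>a\<in>profiles A. prob_prof (\<lambda>j. \<sigma> j h) a * p a * r i a)"

text \<open>Undiscounted payoff \<gamma>_i(\<sigma>) = E[r_i(a^\<theta>) 1_{\<theta><\<infinity>}], as the (nonnegative) series over
  the absorption stage n.\<close>
definition gamma :: "('i::finite \<Rightarrow> 'a set) \<Rightarrow> ('i \<Rightarrow> ('i \<Rightarrow> 'a) \<Rightarrow> real) \<Rightarrow> (('i \<Rightarrow> 'a) \<Rightarrow> real)
     \<Rightarrow> 'i \<Rightarrow> ('i \<Rightarrow> ('i \<Rightarrow> 'a) list \<Rightarrow> 'a \<Rightarrow> real) \<Rightarrow> real" where
  "gamma A r p i \<sigma> =
     (\<Sum>n. \<Sum>h\<in>{h. set h \<subseteq> profiles A \<and> length h = n}. reach p \<sigma> h * absorb_pay A r p \<sigma> i h)"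

text \<open>Minmax value v_i = inf_{\<sigma>_{-i}} sup_{\<sigma>_i} \<gamma>_i(\<sigma>). (The i-th component of \<sigma> is ignored.)\<close>
definition minmax :: "('i::finite \<Rightarrow> 'a set) \<Rightarrow> ('i \<Rightarrow> ('i \<Rightarrow> 'a) \<Rightarrow> real) \<Rightarrow> (('i \<Rightarrow> 'a) \<Rightarrow> real)
     \<Rightarrow> 'i \<Rightarrow> real" where
  "minmax A r p i =
     (INF \<sigma>\<in>{\<sigma>. strat_profile A \<sigma>}. SUP \<tau>\<in>{\<tau>. strat A i \<tau>}. gamma A r p i (\<sigma>(i := \<tau>)))"

definition pos_rec_absorbing_game :: "('i::finite \<Rightarrow> 'a set) \<Rightarrow> ('i \<Rightarrow> ('i \<Rightarrow> 'a) \<Rightarrow> real)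
     \<Rightarrow> (('i \<Rightarrow> 'a) \<Rightarrow> real) \<Rightarrow> bool" where
  "pos_rec_absorbing_game A r p \<longleftrightarrow>
     (\<forall>j. finite (A j) \<and> A j \<noteq> {}) \<and>
     (\<forall>a\<in>profiles A. 0 \<le> p a \<and> p a \<le> 1 \<and> (\<forall>j. 0 < r j a \<and> r j a \<le> 1))"

end

theory Submission imports Defs begin

lemma prob_sum_one:
  fixes y :: "'i::finite \<Rightarrow> 'a \<Rightarrow> real"
  assumes "\<forall>j. finite (A j)" "\<forall>j. mixed (A j) (y j)"
  shows "(\<Sum>a\<in>profiles A. prob_prof y a) = 1"
proof -
  have "(\<Prod>j\<in>UNIV. \<Sum>b\<in>A j. y j b) = (\<Sum>g\<in>PiE UNIV A. \<Prod>j\<in>UNIV. y j (g j))"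
    by (rule prod_sum_PiE) (use assms in auto)
  moreover have "(\<Prod>j\<in>UNIV. \<Sum>b\<in>A j. y j b) = 1"
    using assms(2) by (simp add: mixed_def)
  ultimately show ?thesis by (simp add: profiles_def prob_prof_def)
qed

lemma prob_nonneg:
  assumes "\<forall>j b. 0 \<le> y j b"
  shows "0 \<le> prob_prof y a"
  unfolding prob_prof_def using assms by (simp add: prod_nonneg)

lemma reach_snoc:
  "reach p \<sigma> (h @ [a]) = reach p \<sigma> h * (prob_prof (\<lambda>j. \<sigma> j h) a * (1 - p a))"
proof -
  have "reach p \<sigma> (h @ [a]) = (\<Prod>k<Suc (length h). prob_prof (\<lambda>j. \<sigma> j (take k (h@[a]))) ((h@[a]) ! k) * (1 - p ((h@[a]) ! k)))"
    by (simp add: reach_def)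
  also have "\<dots> = (\<Prod>k<length h. prob_prof (\<lambda>j. \<sigma> j (take k (h@[a]))) ((h@[a]) ! k) * (1 - p ((h@[a]) ! k)))
      * (prob_prof (\<lambda>j. \<sigma> j h) a * (1 - p a))"
    by (simp add: prod.lessThan_Suc)
  also have "(\<Prod>k<length h. prob_prof (\<lambda>j. \<sigma> j (take k (h@[a]))) ((h@[a]) ! k) * (1 - p ((h@[a]) ! k)))
     = reach p \<sigma> h"
    unfolding reach_def by (rule prod.cong) (auto simp: nth_append)
  finally show ?thesis .
qed

lemma H_Suc:
  "{h. set h \<subseteq> P \<and> length h = Suc n} = (\<lambda>(h,a). h @ [a]) ` ({h. set h \<subseteq> P \<and> length h = n} \<times> P)"
proof
  show "{h. set h \<subseteq> P \<and> length h = Suc n} \<subseteq> (\<lambda>(h,a). h @ [a]) ` ({h. set h \<subseteq> P \<and> length h = n} \<times> P)"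
  proof
    fix h assume h: "h \<in> {h. set h \<subseteq> P \<and> length h = Suc n}"
    then have "h \<noteq> []" by auto
    then have e: "h = butlast h @ [last h]" by simp
    have "set (butlast h @ [last h]) \<subseteq> P" using h e by simp
    then have "(butlast h, last h) \<in> {h. set h \<subseteq> P \<and> length h = n} \<times> P" using h by auto
    then show "h \<in> (\<lambda>(h,a). h @ [a]) ` ({h. set h \<subseteq> P \<and> length h = n} \<times> P)"
      using e by (metis (no_types, lifting) case_prod_conv image_eqI)
  qed
qed auto


lemma gamma_bound:
  fixes A :: "'i::finite \<Rightarrow> 'a set"
  assumes game: "pos_rec_absorbing_game A r p"
    and sp: "strat_profile A \<sigma>"
    and M0: "0 \<le> M"
    and bnd: "\<And>h. absorb_pay A r p \<sigma> i h \<le> M * (\<Sum>a\<in>profiles A. prob_prof (\<lambda>j. \<sigma> j h) a * p a)"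
  shows "0 \<le> gamma A r p i \<sigma> \<and> gamma A r p i \<sigma> \<le> M"
proof -
  define P where "P = profiles A"
  define H where "H n = {h. set h \<subseteq> P \<and> length h = n}" for n
  define Pabs where "Pabs h = (\<Sum>a\<in>P. prob_prof (\<lambda>j. \<sigma> j h) a * p a)" for h
  define Q where "Q n = (\<Sum>h\<in>H n. reach p \<sigma> h)" for n
  define g where "g n = (\<Sum>h\<in>H n. reach p \<sigma> h * absorb_pay A r p \<sigma> i h)" for n
  have finA: "\<forall>j. finite (A j)" using game by (simp add: pos_rec_absorbing_game_def)
  have finP: "finite P" unfolding P_def profiles_def using finA by (simp add: finite_PiE)
  have finH: "finite (H n)" for n unfolding H_def using finP by (rule finite_lists_length_eq)
  have pP: "0 \<le> p a \<and> p a \<le> 1 \<and> 0 < r i a \<and> r i a \<le> 1" if "a \<in> P" for a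
    using game that by (simp add: pos_rec_absorbing_game_def P_def)
  have mix: "\<forall>j. mixed (A j) (\<sigma> j h)" for h using sp by (simp add: strat_profile_def strat_def)
  have pr0: "0 \<le> prob_prof (\<lambda>j. \<sigma> j h) a" for h a
    by (rule prob_nonneg) (use mix in \<open>simp add: mixed_def\<close>)
  have pr1: "(\<Sum>a\<in>P. prob_prof (\<lambda>j. \<sigma> j h) a) = 1" for h
    unfolding P_def by (rule prob_sum_one) (use finA mix in auto)
  have reach0: "0 \<le> reach p \<sigma> h" if "h \<in> H n" for h n
  proof -
    have "h ! k \<in> P" if "k < length h" for k using \<open>h \<in> H n\<close> that by (auto simp: H_def)
    then show ?thesis unfolding reach_def
      by (intro prod_nonneg ballI mult_nonneg_nonneg pr0) (use pP in auto)
  qed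
  have ap0: "0 \<le> absorb_pay A r p \<sigma> i h" for h
    unfolding absorb_pay_def P_def[symmetric]
    by (intro sum_nonneg mult_nonneg_nonneg pr0) (use pP in \<open>auto simp: less_imp_le\<close>)
  have g0: "0 \<le> g n" for n unfolding g_def
    by (intro sum_nonneg mult_nonneg_nonneg reach0 ap0) auto
  have Q0: "Q 0 = 1"
  proof -
    have "H 0 = {[]}" by (auto simp: H_def)
    then show ?thesis by (simp add: Q_def reach_def)
  qed
  have Qnn: "0 \<le> Q n" for n unfolding Q_def by (intro sum_nonneg reach0)
  have inj: "inj_on (\<lambda>(h,a). h @ [a]) (H n \<times> P)" for n by (auto simp: inj_on_def)
  have QS: "Q (Suc n) = Q n - (\<Sum>h\<in>H n. reach p \<sigma> h * Pabs h)" for n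
  proof -
    have "Q (Suc n) = (\<Sum>ha\<in>H n \<times> P. reach p \<sigma> ((\<lambda>(h,a). h @ [a]) ha))"
      unfolding Q_def H_def H_Suc[of P n] using inj[of n]
      by (subst sum.reindex) (auto simp: H_def)
    also have "\<dots> = (\<Sum>(h,a)\<in>H n \<times> P. reach p \<sigma> h * (prob_prof (\<lambda>j. \<sigma> j h) a * (1 - p a)))"
      by (intro sum.cong) (auto simp: reach_snoc)
    also have "\<dots> = (\<Sum>h\<in>H n. \<Sum>a\<in>P. reach p \<sigma> h * (prob_prof (\<lambda>j. \<sigma> j h) a * (1 - p a)))"
      by (rule sum.cartesian_product[symmetric])
    also have "\<dots> = (\<Sum>h\<in>H n. reach p \<sigma> h * ((\<Sum>a\<in>P. prob_prof (\<lambda>j. \<sigma> j h) a) - Pabs h))"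
    proof (intro sum.cong refl)
      fix h
      have "(\<Sum>a\<in>P. reach p \<sigma> h * (prob_prof (\<lambda>j. \<sigma> j h) a * (1 - p a)))
          = reach p \<sigma> h * (\<Sum>a\<in>P. prob_prof (\<lambda>j. \<sigma> j h) a - prob_prof (\<lambda>j. \<sigma> j h) a * p a)"
        by (simp only: sum_distrib_left right_diff_distrib mult_1_right)
      also have "\<dots> = reach p \<sigma> h * ((\<Sum>a\<in>P. prob_prof (\<lambda>j. \<sigma> j h) a) - Pabs h)"
        by (simp only: sum_subtractf Pabs_def)
      finally show "(\<Sum>a\<in>P. reach p \<sigma> h * (prob_prof (\<lambda>j. \<sigma> j h) a * (1 - p a)))
          = reach p \<sigma> h * ((\<Sum>a\<in>P. prob_prof (\<lambda>j. \<sigma> j h) a) - Pabs h)" .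
    qed
    also have "\<dots> = Q n - (\<Sum>h\<in>H n. reach p \<sigma> h * Pabs h)"
      by (simp only: pr1 Q_def right_diff_distrib mult_1_right sum_subtractf)
    finally show ?thesis .
  qed
  have gle: "g n \<le> M * (\<Sum>h\<in>H n. reach p \<sigma> h * Pabs h)" for n
    unfolding g_def sum_distrib_left
  proof (intro sum_mono)
    fix h assume hH: "h \<in> H n"
    have "reach p \<sigma> h * absorb_pay A r p \<sigma> i h \<le> reach p \<sigma> h * (M * Pabs h)"
      using mult_left_mono[OF bnd[of h] reach0[OF hH]] by (simp only: Pabs_def P_def)
    then show "reach p \<sigma> h * absorb_pay A r p \<sigma> i h \<le> M * (reach p \<sigma> h * Pabs h)"
      by (simp only: mult.left_commute)
  qed
  have part: "(\<Sum>n<N. g n) \<le> M" for N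
  proof -
    have "(\<Sum>n<N. g n) \<le> (\<Sum>n<N. M * (Q n - Q (Suc n)))"
      by (intro sum_mono) (simp add: QS gle)
    also have "\<dots> = M * (Q 0 - Q N)"
      by (simp add: sum_distrib_left[symmetric] sum_lessThan_telescope')
    also have "\<dots> \<le> M" using Q0 Qnn[of N] M0 by (simp add: mult_left_le)
    finally show ?thesis .
  qed
  have sm: "summable g"
  proof (rule bounded_imp_summable[where B=M])
    fix n show "0 \<le> g n" by (rule g0)
    show "(\<Sum>k\<le>n. g k) \<le> M" using part[of "Suc n"] by (simp only: lessThan_Suc_atMost)
  qed
  have "gamma A r p i \<sigma> = suminf g" unfolding gamma_def g_def H_def P_def by simp
  moreover have "suminf g \<le> M" by (rule suminf_le_const[OF sm part])
  moreover have "0 \<le> suminf g" by (rule suminf_nonneg[OF sm g0])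
  ultimately show ?thesis by simp
qed


lemma prob_upd:
  fixes x :: "'i::finite \<Rightarrow> 'a \<Rightarrow> real"
  assumes "finite (A i)" "a i \<in> A i"
  shows "prob_prof (x(i:=y)) a = (\<Sum>b\<in>A i. y b * prob_prof (x(i:=dirac b)) a)"
proof -
  define R where "R = (\<Prod>j\<in>UNIV-{i}. x j (a j))"
  have e: "prob_prof (x(i:=z)) a = z (a i) * R" for z
  proof -
    have "prob_prof (x(i:=z)) a = (x(i:=z)) i (a i) * (\<Prod>j\<in>UNIV-{i}. (x(i:=z)) j (a j))"
      unfolding prob_prof_def by (rule prod.remove) auto
    also have "(\<Prod>j\<in>UNIV-{i}. (x(i:=z)) j (a j)) = R"
      unfolding R_def by (rule prod.cong) auto
    finally show ?thesis by (simp only: fun_upd_same)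
  qed
  have "(\<Sum>b\<in>A i. y b * prob_prof (x(i:=dirac b)) a) = (\<Sum>b\<in>A i. if b = a i then y (a i) * R else 0)"
    by (rule sum.cong) (auto simp: e dirac_def)
  also have "\<dots> = y (a i) * R" using assms by simp
  finally show ?thesis by (simp add: e)
qed

lemma sum_upd:
  fixes x :: "'i::finite \<Rightarrow> 'a \<Rightarrow> real"
  assumes "finite P" "\<forall>a\<in>P. a i \<in> A i" "finite (A i)"
  shows "(\<Sum>a\<in>P. prob_prof (x(i:=y)) a * f a) = (\<Sum>b\<in>A i. y b * (\<Sum>a\<in>P. prob_prof (x(i:=dirac b)) a * f a))"
proof -
  have "(\<Sum>a\<in>P. prob_prof (x(i:=y)) a * f a) = (\<Sum>a\<in>P. \<Sum>b\<in>A i. y b * (prob_prof (x(i:=dirac b)) a * f a))"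
  proof (rule sum.cong[OF refl])
    fix a assume "a \<in> P"
    then have "prob_prof (x(i:=y)) a = (\<Sum>b\<in>A i. y b * prob_prof (x(i:=dirac b)) a)"
      using assms by (intro prob_upd) auto
    then show "prob_prof (x(i:=y)) a * f a = (\<Sum>b\<in>A i. y b * (prob_prof (x(i:=dirac b)) a * f a))"
      by (simp only: sum_distrib_right mult.assoc)
  qed
  also have "\<dots> = (\<Sum>b\<in>A i. \<Sum>a\<in>P. y b * (prob_prof (x(i:=dirac b)) a * f a))"
    by (rule sum.swap)
  also have "\<dots> = (\<Sum>b\<in>A i. y b * (\<Sum>a\<in>P. prob_prof (x(i:=dirac b)) a * f a))"
    by (simp only: sum_distrib_left)
  finally show ?thesis .
qed


lemma gamma_01:
  fixes A :: "'i::finite \<Rightarrow> 'a set"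
  assumes game: "pos_rec_absorbing_game A r p"
    and sp: "strat_profile A \<sigma>"
  shows "0 \<le> gamma A r p i \<sigma> \<and> gamma A r p i \<sigma> \<le> 1"
proof (rule gamma_bound[OF game sp])
  fix h
  have mix: "\<forall>j. mixed (A j) (\<sigma> j h)" using sp by (simp add: strat_profile_def strat_def)
  have pr0: "0 \<le> prob_prof (\<lambda>j. \<sigma> j h) a" for a
    by (rule prob_nonneg) (use mix in \<open>simp add: mixed_def\<close>)
  show "absorb_pay A r p \<sigma> i h \<le> 1 * (\<Sum>a\<in>profiles A. prob_prof (\<lambda>j. \<sigma> j h) a * p a)"
    unfolding absorb_pay_def
  proof (simp only: mult_1_left, intro sum_mono)
    fix a assume "a \<in> profiles A"
    then have "0 \<le> p a" "r i a \<le> 1" using game by (auto simp: pos_rec_absorbing_game_def)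
    then have "(prob_prof (\<lambda>j. \<sigma> j h) a * p a) * r i a \<le> (prob_prof (\<lambda>j. \<sigma> j h) a * p a) * 1"
      by (intro mult_left_mono) (auto intro: mult_nonneg_nonneg pr0)
    then show "prob_prof (\<lambda>j. \<sigma> j h) a * p a * r i a \<le> prob_prof (\<lambda>j. \<sigma> j h) a * p a" by simp
  qed
qed simp

theorem mainTheorem4:
  fixes A :: "'i::finite \<Rightarrow> 'a set"
    and r :: "'i \<Rightarrow> ('i \<Rightarrow> 'a) \<Rightarrow> real"
    and p :: "('i \<Rightarrow> 'a) \<Rightarrow> real"
    and x :: "'i \<Rightarrow> 'a \<Rightarrow> real"
    and i :: 'i
  assumes "pos_rec_absorbing_game A r p"
    and "x \<in> nonabs A p"
  shows "ereal (minmax A r p i) \<le> max 0 (rho A r p i x)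
         \<and> (rho A r p i x = -\<infinity> \<longrightarrow> minmax A r p i = 0)
         \<and> (rho A r p i x > -\<infinity> \<longrightarrow> rho A r p i x \<ge> ereal (minmax A r p i))"
proof -
  note game = assms(1)
  define P where "P = profiles A"
  have finA: "\<forall>j. finite (A j)" using game by (simp add: pos_rec_absorbing_game_def)
  have finP: "finite P" unfolding P_def profiles_def using finA by (simp add: finite_PiE)
  have PA: "\<forall>a\<in>P. a i \<in> A i" by (auto simp: P_def profiles_def)
  have pP: "0 \<le> p a \<and> p a \<le> 1 \<and> 0 < r i a \<and> r i a \<le> 1" if "a \<in> P" for a
    using game that by (simp add: pos_rec_absorbing_game_def P_def)
  have xm: "\<forall>j. mixed (A j) (x j)" using assms(2) by (simp add: nonabs_def mixed_profile_def)
  define S where "S = {b \<in> A i. pmix A p (x(i := dirac b)) > 0}"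
  define F where "F b = rmix A r p i (x(i := dirac b))" for b
  define M where "M = (if S = {} then 0 else max 0 (Max (F ` S)))"
  have rho_eq: "rho A r p i x = (if S = {} then -\<infinity> else ereal (Max (F ` S)))"
    by (simp add: rho_def S_def F_def Let_def)
  have M0: "0 \<le> M" by (simp add: M_def)
  have finS: "finite S" using finA by (simp add: S_def)
  have FleM: "F b \<le> M" if "b \<in> S" for b
  proof -
    have "F b \<le> Max (F ` S)" using finS that by (intro Max_ge) auto
    then show ?thesis using that by (auto simp: M_def)
  qed
  define N where "N b = (\<Sum>a\<in>P. prob_prof (x(i:=dirac b)) a * (p a * r i a))" for b
  define D where "D b = (\<Sum>a\<in>P. prob_prof (x(i:=dirac b)) a * p a)" for b
  have pr0: "0 \<le> prob_prof (x(i:=dirac b)) a" for a b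
    by (rule prob_nonneg) (use xm in \<open>auto simp: mixed_def dirac_def\<close>)
  have D_eq: "D b = pmix A p (x(i:=dirac b))" for b
    by (simp add: D_def pmix_def P_def mult.commute)
  have F_eq: "F b = N b / D b" for b
    unfolding F_def rmix_def D_eq[symmetric] N_def P_def
    by (simp add: mult.commute mult.left_commute)
  have N0: "0 \<le> N b" for b unfolding N_def
    by (intro sum_nonneg mult_nonneg_nonneg pr0) (use pP in \<open>auto simp: less_imp_le\<close>)
  have D0: "0 \<le> D b" for b unfolding D_def
    by (intro sum_nonneg mult_nonneg_nonneg pr0) (use pP in auto)
  have NleD: "N b \<le> D b" for b unfolding N_def D_def
  proof (intro sum_mono)
    fix a assume "a \<in> P"
    then have "p a * r i a \<le> p a * 1" using pP by (intro mult_left_mono) auto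
    then show "prob_prof (x(i:=dirac b)) a * (p a * r i a) \<le> prob_prof (x(i:=dirac b)) a * p a"
      using pr0 by (simp add: mult_left_mono)
  qed
  have NM: "N b \<le> M * D b" if "b \<in> A i" for b
  proof (cases "D b = 0")
    case True
    then have "N b = 0" using N0[of b] NleD[of b] by simp
    then show ?thesis using True by simp
  next
    case False
    then have "D b > 0" using D0[of b] by simp
    then have "b \<in> S" using that by (simp add: S_def D_eq)
    then have "N b / D b \<le> M" using FleM F_eq by simp
    then show ?thesis using \<open>D b > 0\<close> by (simp add: divide_le_eq mult.commute)
  qed
  have Fnn: "0 \<le> F b" for b using F_eq N0 D0 by simp
  define st where "st = (\<lambda>(j::'i) (h::('i \<Rightarrow> 'a) list). x j)"
  have st_sp: "strat_profile A st" using xm by (simp add: st_def strat_profile_def strat_def)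
  have bound: "gamma A r p i (st(i:=\<tau>)) \<le> M" if "strat A i \<tau>" for \<tau>
  proof -
    have sp: "strat_profile A (st(i:=\<tau>))" using st_sp that by (simp add: strat_profile_def)
    have "0 \<le> gamma A r p i (st(i:=\<tau>)) \<and> gamma A r p i (st(i:=\<tau>)) \<le> M"
    proof (rule gamma_bound[OF game sp M0])
      fix h
      have ex: "(\<lambda>j. (st(i:=\<tau>)) j h) = x(i := \<tau> h)" by (auto simp: st_def)
      have tn: "0 \<le> \<tau> h b" for b using that by (simp add: strat_def mixed_def)
      have "absorb_pay A r p (st(i:=\<tau>)) i h = (\<Sum>a\<in>P. prob_prof (x(i := \<tau> h)) a * (p a * r i a))"
        unfolding absorb_pay_def ex P_def by (simp add: mult.assoc)
      also have "\<dots> = (\<Sum>b\<in>A i. \<tau> h b * N b)"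
        unfolding N_def using finP PA finA by (intro sum_upd) auto
      also have "\<dots> \<le> (\<Sum>b\<in>A i. \<tau> h b * (M * D b))"
        by (intro sum_mono mult_left_mono NM tn)
      also have "\<dots> = M * (\<Sum>b\<in>A i. \<tau> h b * D b)"
        by (simp add: sum_distrib_left mult.left_commute)
      also have "(\<Sum>b\<in>A i. \<tau> h b * D b) = (\<Sum>a\<in>P. prob_prof (x(i := \<tau> h)) a * p a)"
        unfolding D_def using finP PA finA by (intro sum_upd[symmetric]) auto
      finally show "absorb_pay A r p (st(i:=\<tau>)) i h \<le> M * (\<Sum>a\<in>profiles A. prob_prof (\<lambda>j. (st(i:=\<tau>)) j h) a * p a)"
        unfolding ex P_def .
    qed
    then show ?thesis by simp
  qed
  have g01: "0 \<le> gamma A r p i (\<sigma>(i:=\<tau>)) \<and> gamma A r p i (\<sigma>(i:=\<tau>)) \<le> 1"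
    if "strat_profile A \<sigma>" "strat A i \<tau>" for \<sigma> \<tau>
    using that by (intro gamma_01[OF game]) (simp add: strat_profile_def)
  have Tne: "{\<tau>. strat A i \<tau>} \<noteq> {}" using st_sp by (auto simp: strat_profile_def)
  have Sup0: "0 \<le> (SUP \<tau>\<in>{\<tau>. strat A i \<tau>}. gamma A r p i (\<sigma>(i := \<tau>)))"
    if "strat_profile A \<sigma>" for \<sigma>
  proof -
    obtain \<tau> where t: "strat A i \<tau>" using Tne by auto
    have "bdd_above ((\<lambda>\<tau>. gamma A r p i (\<sigma>(i := \<tau>))) ` {\<tau>. strat A i \<tau>})"
      using g01[OF that] by (intro bdd_aboveI[where M=1]) auto
    then have "gamma A r p i (\<sigma>(i := \<tau>)) \<le> (SUP \<tau>\<in>{\<tau>. strat A i \<tau>}. gamma A r p i (\<sigma>(i := \<tau>)))"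
      using t by (intro cSUP_upper) auto
    then show ?thesis using g01[OF that t] by linarith
  qed
  have mm0: "0 \<le> minmax A r p i"
    unfolding minmax_def using st_sp Sup0 by (intro cINF_greatest) auto
  have mmM: "minmax A r p i \<le> M"
  proof -
    have "bdd_below ((\<lambda>\<sigma>. SUP \<tau>\<in>{\<tau>. strat A i \<tau>}. gamma A r p i (\<sigma>(i := \<tau>))) ` {\<sigma>. strat_profile A \<sigma>})"
      using Sup0 by (intro bdd_belowI[where m=0]) auto
    then have "minmax A r p i \<le> (SUP \<tau>\<in>{\<tau>. strat A i \<tau>}. gamma A r p i (st(i := \<tau>)))"
      unfolding minmax_def using st_sp by (intro cINF_lower) auto
    also have "\<dots> \<le> M" using Tne bound by (intro cSUP_least) auto
    finally show ?thesis .
  qed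
  show ?thesis
  proof (cases "S = {}")
    case True
    then have "M = 0" by (simp add: M_def)
    then show ?thesis using True rho_eq mm0 mmM by simp
  next
    case False
    have "F ` S \<noteq> {}" using False by simp
    then obtain b where "b \<in> S" by auto
    then have "0 \<le> Max (F ` S)" using finS Fnn by (meson Max_ge finite_imageI image_eqI order_trans)
    then have "M = Max (F ` S)" using False by (simp add: M_def)
    then show ?thesis using False rho_eq mm0 mmM \<open>0 \<le> Max (F ` S)\<close> by simp
  qed
qed

end
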